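(* Let $P\in\mathcal{P}$ and $\nu:\mathcal{P}\to\mathcal{H}$. Then $\nu$ is pathwise differentiable at $P$ with local parameter $\dot{\nu}_P=\eta_P$ if both of the following hold: (i) $\eta_P:\dot{\mathcal{P}}_P\to\mathcal{H}$ is bounded and linear, and there exists a set of scores $\mathcal{S}(P)$ whose $L^2(P)$-closure equals $\dot{\mathcal{P}}_P$ such that for every $s\in\mathcal{S}(P)$ there is at least one submodel $\{P_\epsilon:\epsilon\}\in\mathscr{P}(P,\mathcal{P},s)$ with $\|\nu(P_\epsilon)-\nu(P)-\epsilon\,\eta_P(s)\|_{\mathcal{H}}=o(\epsilon)$; and (ii) $\nu$ is locally Lipschitz at $P$: there exist $c,\delta\in(0,\infty)$ such that $\|\nu(P_1)-\nu(P_2)\|_{\mathcal{H}}\le cH(P_1,P_2)$ for all $P_1,P_2\in B_\delta(P)$, where $B_\delta(P)=\{P'\in\mathcal{P}:H(P,P')\le\delta\}$.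
   Context: Let $(\mathcal{Z},\mathbf{B})$ be a Polish space and $\mathcal{P}$ a model of probability distributions on it dominated by a $\sigma$-finite measure $\lambda$. $H(P,P')=[\int(\sqrt{dP}-\sqrt{dP'})^2]^{1/2}$ is the Hellinger distance. For $P\in\mathcal{P}$ and $s\in L^2(P)$, $\mathscr{P}(P,\mathcal{P},s)$ is the set of submodels $\{P_\epsilon:\epsilon\in[0,\delta)\}\subset\mathcal{P}$ with $\|p_\epsilon^{1/2}-p^{1/2}-\epsilon sp^{1/2}/2\|_{L^2(\lambda)}=o(\epsilon)$ as $\epsilon\to0$ ($p_\epsilon,p$ the $\lambda$-densities). The tangent set at $P$ is $\{s:\mathscr{P}(P,\mathcal{P},s)\neq\emptyset\}$ and the tangent space $\dot{\mathcal{P}}_P$ its closed linear span in $L^2(P)$. $\mathcal{H}$ is a real separable Hilbert space. $\nu$ is pathwise differentiable at $P$ with local parameter $\dot{\nu}_P$ if $\dot{\nu}_P:\dot{\mathcal{P}}_P\to\mathcal{H}$ is continuous linear and $\|\nu(P_\epsilon)-\nu(P)-\epsilon\dot{\nu}_P(s)\|_{\mathcal{H}}=o(\epsilon)$ for every $s$ in the tangent set and every submodel in $\mathscr{P}(P,\mathcal{P},s)$. *)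

theory Defs
  imports "HOL-Probability.Probability"
begin

definition dens :: "'a measure \<Rightarrow> 'a measure \<Rightarrow> 'a \<Rightarrow> real" where
  "dens lam Q x = enn2real (RN_deriv lam Q x)"

definition hellinger :: "'a measure \<Rightarrow> 'a measure \<Rightarrow> 'a measure \<Rightarrow> real" where
  "hellinger lam Q Q' = sqrt (\<integral>x. (sqrt (dens lam Q x) - sqrt (dens lam Q' x))\<^sup>2 \<partial>lam)"

definition L2 :: "'a measure \<Rightarrow> ('a \<Rightarrow> real) set" where
  "L2 M = {f. f \<in> borel_measurable M \<and> integrable M (\<lambda>x. (f x)\<^sup>2)}"

definition L2norm :: "'a measure \<Rightarrow> ('a \<Rightarrow> real) \<Rightarrow> real" where
  "L2norm M f = sqrt (\<integral>x. (f x)\<^sup>2 \<partial>M)"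

definition L2closure :: "'a measure \<Rightarrow> ('a \<Rightarrow> real) set \<Rightarrow> ('a \<Rightarrow> real) set" where
  "L2closure M A = {f \<in> L2 M. \<forall>e>0. \<exists>g\<in>A. L2norm M (\<lambda>x. f x - g x) < e}"

definition linspan :: "('a \<Rightarrow> real) set \<Rightarrow> ('a \<Rightarrow> real) set" where
  "linspan A = {f. \<exists>(n::nat) c g. (\<forall>i<n. g i \<in> A) \<and> f = (\<lambda>x. \<Sum>i<n. c i * g i x)}"

text \<open>Submodels through P with score s (differentiable in quadratic mean):
  the set \<open>\<P>(P, Model, s)\<close>.\<close>
definition submodels :: "'a measure \<Rightarrow> 'a measure set \<Rightarrow> 'a measure \<Rightarrow> ('a \<Rightarrow> real)
    \<Rightarrow> (real \<Rightarrow> 'a measure) set" where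
  "submodels lam Model P s = {Pe. \<exists>\<delta>>0. (\<forall>\<epsilon>\<in>{0..<\<delta>}. Pe \<epsilon> \<in> Model) \<and>
     ((\<lambda>\<epsilon>. L2norm lam (\<lambda>x. sqrt (dens lam (Pe \<epsilon>) x) - sqrt (dens lam P x)
                 - \<epsilon> * s x * sqrt (dens lam P x) / 2) / \<epsilon>) \<longlongrightarrow> 0) (at_right 0)}"

definition tangent_set :: "'a measure \<Rightarrow> 'a measure set \<Rightarrow> 'a measure \<Rightarrow> ('a \<Rightarrow> real) set" where
  "tangent_set lam Model P = {s \<in> L2 P. submodels lam Model P s \<noteq> {}}"

definition tangent_space :: "'a measure \<Rightarrow> 'a measure set \<Rightarrow> 'a measure \<Rightarrow> ('a \<Rightarrow> real) set" where
  "tangent_space lam Model P = L2closure P (linspan (tangent_set lam Model P))"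

definition bounded_linear_on :: "'a measure \<Rightarrow> ('a \<Rightarrow> real) set \<Rightarrow> (('a \<Rightarrow> real) \<Rightarrow> 'b::real_normed_vector) \<Rightarrow> bool" where
  "bounded_linear_on P T \<eta> \<longleftrightarrow>
     (\<forall>s\<in>T. \<forall>t\<in>T. \<forall>a b. \<eta> (\<lambda>x. a * s x + b * t x) = a *\<^sub>R \<eta> s + b *\<^sub>R \<eta> t) \<and>
     (\<exists>C. \<forall>s\<in>T. norm (\<eta> s) \<le> C * L2norm P s)"

definition pathwise_differentiable ::
  "'a measure \<Rightarrow> 'a measure set \<Rightarrow> ('a measure \<Rightarrow> 'b::real_normed_vector) \<Rightarrow> 'a measure
     \<Rightarrow> (('a \<Rightarrow> real) \<Rightarrow> 'b) \<Rightarrow> bool" where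
  "pathwise_differentiable lam Model \<nu> P \<eta> \<longleftrightarrow>
     bounded_linear_on P (tangent_space lam Model P) \<eta> \<and>
     (\<forall>s\<in>tangent_set lam Model P. \<forall>Pe\<in>submodels lam Model P s.
        ((\<lambda>\<epsilon>. norm (\<nu> (Pe \<epsilon>) - \<nu> P - \<epsilon> *\<^sub>R \<eta> s) / \<epsilon>) \<longlongrightarrow> 0) (at_right 0))"

end

theory Submission
  imports Defs
begin


lemma L2_comb:
  assumes f: "f \<in> L2 M" and g: "g \<in> L2 M"
  shows "(\<lambda>x. a * f x + b * g x) \<in> L2 M"
proof -
  have fm[measurable]: "f \<in> borel_measurable M" and fi: "integrable M (\<lambda>x. (f x)\<^sup>2)"
    using f by (auto simp: L2_def)
  have gm[measurable]: "g \<in> borel_measurable M" and gi: "integrable M (\<lambda>x. (g x)\<^sup>2)"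
    using g by (auto simp: L2_def)
  have ib: "integrable M (\<lambda>x. 2 * a\<^sup>2 * (f x)\<^sup>2 + 2 * b\<^sup>2 * (g x)\<^sup>2)"
    using fi gi by auto
  have bd: "norm ((a * f x + b * g x)\<^sup>2) \<le> norm (2 * a\<^sup>2 * (f x)\<^sup>2 + 2 * b\<^sup>2 * (g x)\<^sup>2)" for x
  proof -
    have "0 \<le> (a * f x - b * g x)\<^sup>2" by simp
    then have h: "(a * f x + b * g x)\<^sup>2 \<le> 2 * a\<^sup>2 * (f x)\<^sup>2 + 2 * b\<^sup>2 * (g x)\<^sup>2"
      by (simp add: power2_eq_square algebra_simps)
    have "0 \<le> 2 * a\<^sup>2 * (f x)\<^sup>2 + 2 * b\<^sup>2 * (g x)\<^sup>2" by simp
    then show ?thesis using h by simp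
  qed
  have ms: "(\<lambda>x. (a * f x + b * g x)\<^sup>2) \<in> borel_measurable M" by measurable
  have "integrable M (\<lambda>x. (a * f x + b * g x)\<^sup>2)"
    by (rule Bochner_Integration.integrable_bound[OF ib ms AE_I2[OF bd]])
  then show ?thesis by (simp add: L2_def)
qed

lemma L2_prod:
  assumes f: "f \<in> L2 M" and g: "g \<in> L2 M"
  shows "integrable M (\<lambda>x. f x * g x)"
proof -
  have fm[measurable]: "f \<in> borel_measurable M" and fi: "integrable M (\<lambda>x. (f x)\<^sup>2)"
    using f by (auto simp: L2_def)
  have gm[measurable]: "g \<in> borel_measurable M" and gi: "integrable M (\<lambda>x. (g x)\<^sup>2)"
    using g by (auto simp: L2_def)
  have ib: "integrable M (\<lambda>x. (f x)\<^sup>2 + (g x)\<^sup>2)"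
    using fi gi by auto
  have bd: "norm (f x * g x) \<le> norm ((f x)\<^sup>2 + (g x)\<^sup>2)" for x
  proof -
    have "0 \<le> (\<bar>f x\<bar> - \<bar>g x\<bar>)\<^sup>2" by simp
    then have "2 * (\<bar>f x\<bar> * \<bar>g x\<bar>) \<le> (f x)\<^sup>2 + (g x)\<^sup>2"
      by (simp add: power2_eq_square algebra_simps)
    moreover have "0 \<le> \<bar>f x\<bar> * \<bar>g x\<bar>" by simp
    moreover have "0 \<le> (f x)\<^sup>2 + (g x)\<^sup>2" by simp
    moreover have "norm (f x * g x) = \<bar>f x\<bar> * \<bar>g x\<bar>" by (simp add: abs_mult)
    ultimately show ?thesis by simp
  qed
  have ms: "(\<lambda>x. f x * g x) \<in> borel_measurable M" by measurable
  show ?thesis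
    by (rule Bochner_Integration.integrable_bound[OF ib ms AE_I2[OF bd]])
qed

lemma quad_CS:
  fixes A B X :: real
  assumes "\<And>t. 0 \<le> A - 2 * t * X + t\<^sup>2 * B" "0 \<le> A" "0 \<le> B"
  shows "X \<le> sqrt A * sqrt B"
proof (cases "B = 0")
  case True
  have "X = 0"
  proof (rule ccontr)
    assume "X \<noteq> 0"
    then have "A - 2 * ((A + 1) / X) * X + ((A + 1) / X)\<^sup>2 * B = - A - 2" using True by simp
    then show False using assms(1)[of "(A + 1) / X"] assms(2) by linarith
  qed
  then show ?thesis using assms(2,3) by simp
next
  case False
  then have Bp: "B > 0" using assms by simp
  have "0 \<le> A - 2 * (X / B) * X + (X / B)\<^sup>2 * B" by (rule assms(1))
  then have "0 \<le> A - X\<^sup>2 / B" using Bp by (simp add: power2_eq_square field_simps)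
  then have "X\<^sup>2 \<le> A * B" using Bp by (simp add: field_simps)
  then have "sqrt (X\<^sup>2) \<le> sqrt (A * B)" by (rule real_sqrt_le_mono)
  then show ?thesis by (simp add: real_sqrt_mult)
qed

lemma L2_minkowski:
  assumes f: "f \<in> L2 M" and g: "g \<in> L2 M"
  shows "L2norm M (\<lambda>x. f x + g x) \<le> L2norm M f + L2norm M g"
proof -
  have fi: "integrable M (\<lambda>x. (f x)\<^sup>2)" using f by (auto simp: L2_def)
  have gi: "integrable M (\<lambda>x. (g x)\<^sup>2)" using g by (auto simp: L2_def)
  have fg: "integrable M (\<lambda>x. f x * g x)" by (rule L2_prod[OF f g])
  define A where "A = (\<integral>x. (f x)\<^sup>2 \<partial>M)"
  define B where "B = (\<integral>x. (g x)\<^sup>2 \<partial>M)"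
  define X where "X = (\<integral>x. f x * g x \<partial>M)"
  have A0: "0 \<le> A" unfolding A_def by simp
  have B0: "0 \<le> B" unfolding B_def by simp
  have q: "0 \<le> A - 2 * t * X + t\<^sup>2 * B" for t
  proof -
    have "0 \<le> (\<integral>x. (f x - t * g x)\<^sup>2 \<partial>M)" by simp
    also have "(\<integral>x. (f x - t * g x)\<^sup>2 \<partial>M) = (\<integral>x. (f x)\<^sup>2 - (2 * t) * (f x * g x) + t\<^sup>2 * (g x)\<^sup>2 \<partial>M)"
      by (simp add: power2_eq_square algebra_simps)
    also have "\<dots> = A - 2 * t * X + t\<^sup>2 * B"
      unfolding A_def B_def X_def using fi gi fg by simp
    finally show ?thesis .
  qed
  have cs: "X \<le> sqrt A * sqrt B" by (rule quad_CS[OF q A0 B0])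
  have "(\<integral>x. (f x + g x)\<^sup>2 \<partial>M) = (\<integral>x. (f x)\<^sup>2 + 2 * (f x * g x) + (g x)\<^sup>2 \<partial>M)"
    by (simp add: power2_eq_square algebra_simps)
  also have "\<dots> = A + 2 * X + B"
    unfolding A_def B_def X_def using fi gi fg by simp
  also have "\<dots> \<le> (sqrt A + sqrt B)\<^sup>2"
    using cs A0 B0 by (simp add: power2_eq_square algebra_simps)
  finally have "sqrt (\<integral>x. (f x + g x)\<^sup>2 \<partial>M) \<le> sqrt ((sqrt A + sqrt B)\<^sup>2)"
    by (rule real_sqrt_le_mono)
  then show ?thesis unfolding L2norm_def A_def B_def by simp
qed

lemma L2norm_scale: "L2norm M (\<lambda>x. a * f x) = \<bar>a\<bar> * L2norm M f"
  by (simp add: L2norm_def power_mult_distrib real_sqrt_mult)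

lemma L2norm_nonneg: "0 \<le> L2norm M f"
  by (simp add: L2norm_def)

lemma L2_minus:
  assumes f: "f \<in> L2 M" and g: "g \<in> L2 M"
  shows "L2norm M (\<lambda>x. f x - g x) \<le> L2norm M f + L2norm M g"
proof -
  have "(\<lambda>x. (-1) * g x + 0 * g x) \<in> L2 M" by (rule L2_comb[OF g g])
  then have "(\<lambda>x. - g x) \<in> L2 M" by simp
  from L2_minkowski[OF f this] show ?thesis
    using L2norm_scale[of M "-1" g] by simp
qed

lemma L2_cong: "f \<in> L2 M \<Longrightarrow> (\<And>x. f x = g x) \<Longrightarrow> g \<in> L2 M"
proof -
  assume "f \<in> L2 M" "\<And>x. f x = g x"
  moreover have "f = g" using \<open>\<And>x. f x = g x\<close> by (rule ext)
  ultimately show ?thesis by simp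
qed

lemma L2_diff: "f \<in> L2 M \<Longrightarrow> g \<in> L2 M \<Longrightarrow> (\<lambda>x. f x - g x) \<in> L2 M"
  by (rule L2_cong[OF L2_comb[of f M g 1 "-1"]]) auto

lemma L2_add: "f \<in> L2 M \<Longrightarrow> g \<in> L2 M \<Longrightarrow> (\<lambda>x. f x + g x) \<in> L2 M"
  by (rule L2_cong[OF L2_comb[of f M g 1 1]]) auto

lemma L2_scale: "f \<in> L2 M \<Longrightarrow> (\<lambda>x. a * f x) \<in> L2 M"
  by (rule L2_cong[OF L2_comb[of f M f a 0]]) auto

lemma L2norm_swap: "L2norm M (\<lambda>x. f x - g x) = L2norm M (\<lambda>x. g x - f x)"
  by (simp add: L2norm_def power2_commute)

lemma L2norm_cong: "(\<And>x. f x = g x) \<Longrightarrow> L2norm M f = L2norm M g"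
proof -
  assume "\<And>x. f x = g x"
  then have "f = g" by (rule ext)
  then show ?thesis by simp
qed

lemma L2_zero: "(\<lambda>x. 0::real) \<in> L2 M"
  by (simp add: L2_def)

lemma linspanE:
  assumes "f \<in> linspan A"
  obtains n :: nat and c g where "\<forall>i<n. g i \<in> A" "f = (\<lambda>x. \<Sum>i<n. c i * g i x)"
  using assms unfolding linspan_def by blast
lemma linspanI:
  assumes "\<forall>i<(n::nat). g i \<in> A" "f = (\<lambda>x. \<Sum>i<n. c i * g i x)"
  shows "f \<in> linspan A"
  using assms unfolding linspan_def by blast

lemma linspan_L2:
  assumes "A \<subseteq> L2 M"
  shows "linspan A \<subseteq> L2 M"
proof
  fix f assume "f \<in> linspan A"
  then obtain n :: nat and c g where g: "\<forall>i<n. g i \<in> A" and f: "f = (\<lambda>x. \<Sum>i<n. c i * g i x)"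
    by (rule linspanE)
  have "(\<lambda>x. \<Sum>i<m. c i * g i x) \<in> L2 M" if "m \<le> n" for m
    using that
  proof (induction m)
    case 0
    then show ?case using L2_zero by simp
  next
    case (Suc m)
    then have "(\<lambda>x. \<Sum>i<m. c i * g i x) \<in> L2 M" by simp
    moreover have "g m \<in> L2 M" using g Suc.prems assms by auto
    ultimately have "(\<lambda>x. 1 * (\<Sum>i<m. c i * g i x) + c m * g m x) \<in> L2 M"
      by (rule L2_comb)
    then show ?case by simp
  qed
  then show "f \<in> L2 M" using f by simp
qed

lemma linspan_comb:
  assumes "f \<in> linspan A" "h \<in> linspan A"
  shows "(\<lambda>x. a * f x + b * h x) \<in> linspan A"
proof -
  obtain n :: nat and c g where g: "\<forall>i<n. g i \<in> A" and f: "f = (\<lambda>x. \<Sum>i<n. c i * g i x)"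
    using assms(1) by (rule linspanE)
  obtain m :: nat and c' g' where g': "\<forall>i<m. g' i \<in> A" and h: "h = (\<lambda>x. \<Sum>i<m. c' i * g' i x)"
    using assms(2) by (rule linspanE)
  define C where "C i = (if i < n then a * c i else b * c' (i - n))" for i
  define G where "G i = (if i < n then g i else g' (i - n))" for i
  have G: "\<forall>i<n+m. G i \<in> A" using g g' by (auto simp: G_def)
  have eq: "(\<Sum>i<n+k. C i * G i x) = a * (\<Sum>i<n. c i * g i x) + b * (\<Sum>i<k. c' i * g' i x)" for k x
  proof (induction k)
    case 0
    have "(\<Sum>i<n. C i * G i x) = (\<Sum>i<n. a * (c i * g i x))"
      by (rule sum.cong) (auto simp: C_def G_def)
    then show ?case by (simp add: sum_distrib_left)
  next
    case (Suc k)
    then show ?case by (simp add: C_def G_def algebra_simps)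
  qed
  have "(\<lambda>x. a * f x + b * h x) = (\<lambda>x. \<Sum>i<n+m. C i * G i x)"
    using eq f h by simp
  then show ?thesis using G by (intro linspanI) auto
qed

lemma L2closure_comb:
  assumes XL: "X \<subseteq> L2 M"
    and Xc: "\<And>f g. f \<in> X \<Longrightarrow> g \<in> X \<Longrightarrow> (\<lambda>x. a * f x + b * g x) \<in> X"
    and f: "f \<in> L2closure M X" and g: "g \<in> L2closure M X"
  shows "(\<lambda>x. a * f x + b * g x) \<in> L2closure M X"
proof -
  have fL: "f \<in> L2 M" and gL: "g \<in> L2 M" using f g by (auto simp: L2closure_def)
  have "\<exists>h\<in>X. L2norm M (\<lambda>x. a * f x + b * g x - h x) < e" if e: "e > 0" for e
  proof -
    have e1: "e / (2 * (\<bar>a\<bar> + 1)) > 0" using e by simp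
    have e2: "e / (2 * (\<bar>b\<bar> + 1)) > 0" using e by simp
    obtain f1 where f1: "f1 \<in> X" "L2norm M (\<lambda>x. f x - f1 x) < e / (2 * (\<bar>a\<bar> + 1))"
      using f e1 unfolding L2closure_def by blast
    obtain g1 where g1: "g1 \<in> X" "L2norm M (\<lambda>x. g x - g1 x) < e / (2 * (\<bar>b\<bar> + 1))"
      using g e2 unfolding L2closure_def by blast
    have df: "(\<lambda>x. f x - f1 x) \<in> L2 M" using L2_diff fL f1(1) XL by blast
    have dg: "(\<lambda>x. g x - g1 x) \<in> L2 M" using L2_diff gL g1(1) XL by blast
    have "L2norm M (\<lambda>x. a * f x + b * g x - (a * f1 x + b * g1 x))
        = L2norm M (\<lambda>x. a * (f x - f1 x) + b * (g x - g1 x))"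
      by (rule L2norm_cong) (simp add: algebra_simps)
    also have "\<dots> \<le> L2norm M (\<lambda>x. a * (f x - f1 x)) + L2norm M (\<lambda>x. b * (g x - g1 x))"
      by (rule L2_minkowski[OF L2_scale[OF df] L2_scale[OF dg]])
    also have "\<dots> = \<bar>a\<bar> * L2norm M (\<lambda>x. f x - f1 x) + \<bar>b\<bar> * L2norm M (\<lambda>x. g x - g1 x)"
      by (simp add: L2norm_scale)
    also have "\<dots> \<le> \<bar>a\<bar> * (e / (2 * (\<bar>a\<bar> + 1))) + \<bar>b\<bar> * (e / (2 * (\<bar>b\<bar> + 1)))"
      using f1(2) g1(2) by (intro add_mono mult_left_mono) auto
    also have "\<dots> < e"
    proof -
      have "\<bar>a\<bar> * (e / (2 * (\<bar>a\<bar> + 1))) < e / 2"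
        using e by (simp add: field_simps)
      moreover have "\<bar>b\<bar> * (e / (2 * (\<bar>b\<bar> + 1))) < e / 2"
        using e by (simp add: field_simps)
      ultimately show ?thesis by linarith
    qed
    finally have lt: "L2norm M (\<lambda>x. a * f x + b * g x - (a * f1 x + b * g1 x)) < e" .
    show ?thesis
      by (rule bexI[OF _ Xc[OF f1(1) g1(1)]]) (use lt in simp)
  qed
  then show ?thesis using L2_comb[OF fL gL] by (auto simp: L2closure_def)
qed

lemma L2closure_sub:
  assumes "X \<subseteq> L2 M" shows "X \<subseteq> L2closure M X"
proof
  fix f assume f: "f \<in> X"
  have z: "L2norm M (\<lambda>x. f x - f x) = 0" by (simp add: L2norm_def)
  have "\<exists>g\<in>X. L2norm M (\<lambda>x. f x - g x) < e" if "e > 0" for e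
    using f z that by (intro bexI[of _ f]) auto
  then show "f \<in> L2closure M X" using f assms unfolding L2closure_def by blast
qed

lemma dens_L2:
  assumes lam_sf: "sigma_finite_measure lam"
    and Q: "prob_space Q" "sets Q = sets lam" "absolutely_continuous lam Q"
  shows "(\<lambda>x. sqrt (dens lam Q x)) \<in> L2 lam"
proof -
  have m: "dens lam Q \<in> borel_measurable lam" unfolding dens_def by measurable
  have "integrable Q (\<lambda>x. 1::real)"
    using Q(1) by (intro finite_measure.integrable_const prob_space.finite_measure)
  then have "integrable lam (\<lambda>x. enn2real (RN_deriv lam Q x) * 1)"
    using sigma_finite_measure.RN_deriv_integrable[OF lam_sf prob_space_imp_sigma_finite[OF Q(1)] Q(3) Q(2), of "\<lambda>x. 1"]
    by simp
  then have "integrable lam (\<lambda>x. (sqrt (dens lam Q x))\<^sup>2)"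
    by (simp add: dens_def)
  moreover have "(\<lambda>x. sqrt (dens lam Q x)) \<in> borel_measurable lam" using m by measurable
  ultimately show ?thesis by (simp add: L2_def)
qed

lemma dens_weighted:
  assumes lam_sf: "sigma_finite_measure lam"
    and Q: "prob_space Q" "sets Q = sets lam" "absolutely_continuous lam Q"
    and f: "f \<in> L2 Q"
  shows "(\<lambda>x. f x * sqrt (dens lam Q x)) \<in> L2 lam"
    and "L2norm lam (\<lambda>x. f x * sqrt (dens lam Q x)) = L2norm Q f"
proof -
  have m: "dens lam Q \<in> borel_measurable lam" unfolding dens_def by measurable
  have fmQ: "f \<in> borel_measurable Q" using f by (simp add: L2_def)
  have "measurable Q (borel::real measure) = measurable lam borel" by (rule measurable_cong_sets[OF Q(2) refl])
  then have fm: "f \<in> borel_measurable lam" using fmQ by simp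
  have fi: "integrable Q (\<lambda>x. (f x)\<^sup>2)" using f by (simp add: L2_def)
  have fm2: "(\<lambda>x. (f x)\<^sup>2) \<in> borel_measurable lam" using fm by measurable
  note RI = sigma_finite_measure.RN_deriv_integrable[OF lam_sf prob_space_imp_sigma_finite[OF Q(1)] Q(3) Q(2) fm2]
  note RL = sigma_finite_measure.RN_deriv_integral[OF lam_sf prob_space_imp_sigma_finite[OF Q(1)] Q(3) Q(2) fm2]
  have sq: "(f x * sqrt (dens lam Q x))\<^sup>2 = enn2real (RN_deriv lam Q x) * (f x)\<^sup>2" for x
    by (simp add: dens_def power_mult_distrib)
  have "integrable lam (\<lambda>x. (f x * sqrt (dens lam Q x))\<^sup>2)"
    using RI fi unfolding sq by simp
  moreover have "(\<lambda>x. f x * sqrt (dens lam Q x)) \<in> borel_measurable lam" using m fm by measurable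
  ultimately show "(\<lambda>x. f x * sqrt (dens lam Q x)) \<in> L2 lam" by (simp add: L2_def)
  show "L2norm lam (\<lambda>x. f x * sqrt (dens lam Q x)) = L2norm Q f"
    unfolding L2norm_def sq using RL by simp
qed



theorem lemma2:
  fixes lam :: "'a::polish_space measure"
    and Model :: "'a measure set"
    and P :: "'a measure"
    and \<nu> :: "'a measure \<Rightarrow> 'b::{real_inner, polish_space}"
    and \<eta> :: "('a \<Rightarrow> real) \<Rightarrow> 'b"
  assumes lam_borel: "sets lam = sets borel"
    and lam_sf: "sigma_finite_measure lam"
    and model: "\<And>Q. Q \<in> Model \<Longrightarrow> prob_space Q \<and> sets Q = sets lam \<and> absolutely_continuous lam Q"
    and P_in: "P \<in> Model"
    and eta_bl: "bounded_linear_on P (tangent_space lam Model P) \<eta>"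
    and S_sub: "S \<subseteq> L2 P"
    and S_dense: "L2closure P S = tangent_space lam Model P"
    and S_paths: "\<forall>s\<in>S. \<exists>Pe\<in>submodels lam Model P s.
                    ((\<lambda>\<epsilon>. norm (\<nu> (Pe \<epsilon>) - \<nu> P - \<epsilon> *\<^sub>R \<eta> s) / \<epsilon>) \<longlongrightarrow> 0) (at_right 0)"
    and lipschitz: "\<exists>c>0. \<exists>\<delta>>0. \<forall>P1\<in>{Q\<in>Model. hellinger lam P Q \<le> \<delta>}.
                    \<forall>P2\<in>{Q\<in>Model. hellinger lam P Q \<le> \<delta>}.
                      norm (\<nu> P1 - \<nu> P2) \<le> c * hellinger lam P1 P2"
  shows "pathwise_differentiable lam Model \<nu> P \<eta>"
proof -
  define T where "T = tangent_space lam Model P"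
  define TS where "TS = tangent_set lam Model P"
  have TS_L2: "TS \<subseteq> L2 P" unfolding TS_def tangent_set_def by auto
  have T_eq: "T = L2closure P (linspan TS)" unfolding T_def TS_def tangent_space_def ..
  have Tcomb: "(\<lambda>x. a * f x + b * g x) \<in> T" if "f \<in> T" "g \<in> T" for f g a b
    using L2closure_comb[OF linspan_L2[OF TS_L2] linspan_comb] that T_eq by blast
  obtain C where C: "\<forall>s\<in>T. norm (\<eta> s) \<le> C * L2norm P s"
    using eta_bl unfolding bounded_linear_on_def T_def by blast
  have lin: "\<forall>s\<in>T. \<forall>t\<in>T. \<forall>a b. \<eta> (\<lambda>x. a * s x + b * t x) = a *\<^sub>R \<eta> s + b *\<^sub>R \<eta> t"
    using eta_bl unfolding bounded_linear_on_def T_def by blast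
  obtain c \<delta> where c: "c > 0" and \<delta>: "\<delta> > 0"
    and lip: "\<And>P1 P2. P1 \<in> Model \<Longrightarrow> hellinger lam P P1 \<le> \<delta> \<Longrightarrow> P2 \<in> Model \<Longrightarrow> hellinger lam P P2 \<le> \<delta>
       \<Longrightarrow> norm (\<nu> P1 - \<nu> P2) \<le> c * hellinger lam P1 P2"
    using lipschitz by auto
  have PM: "prob_space P" "sets P = sets lam" "absolutely_continuous lam P"
    using model[OF P_in] by auto
  have DL: "(\<lambda>x. sqrt (dens lam Q x)) \<in> L2 lam" if "Q \<in> Model" for Q
    using model[OF that] dens_L2[OF lam_sf] by blast
  have W1: "(\<lambda>x. f x * sqrt (dens lam P x)) \<in> L2 lam" if "f \<in> L2 P" for f
    by (rule dens_weighted(1)[OF lam_sf PM that])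
  have W2: "L2norm lam (\<lambda>x. f x * sqrt (dens lam P x)) = L2norm P f" if "f \<in> L2 P" for f
    by (rule dens_weighted(2)[OF lam_sf PM that])
  show ?thesis unfolding pathwise_differentiable_def
  proof (intro conjI ballI)
    show "bounded_linear_on P (tangent_space lam Model P) \<eta>" by (rule eta_bl)
    fix s Pe assume s: "s \<in> tangent_set lam Model P" and Pe: "Pe \<in> submodels lam Model P s"
    have sL: "s \<in> L2 P" using s unfolding tangent_set_def by auto
    have "s \<in> linspan TS"
      by (rule linspanI[of 1 "\<lambda>_. s" _ _ "\<lambda>_. 1"]) (use s in \<open>auto simp: TS_def\<close>)
    then have sT: "s \<in> T" using L2closure_sub[OF linspan_L2[OF TS_L2]] T_eq by blast
    obtain d1 where d1: "d1 > 0" and mem1: "\<forall>\<epsilon>\<in>{0..<d1}. Pe \<epsilon> \<in> Model"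
      and R1: "((\<lambda>\<epsilon>. L2norm lam (\<lambda>x. sqrt (dens lam (Pe \<epsilon>) x) - sqrt (dens lam P x)
                 - \<epsilon> * s x * sqrt (dens lam P x) / 2) / \<epsilon>) \<longlongrightarrow> 0) (at_right 0)"
      using Pe unfolding submodels_def by blast
    show "((\<lambda>\<epsilon>. norm (\<nu> (Pe \<epsilon>) - \<nu> P - \<epsilon> *\<^sub>R \<eta> s) / \<epsilon>) \<longlongrightarrow> 0) (at_right 0)"
      unfolding tendsto_iff
    proof (intro allI impI)
      fix e :: real assume e: "e > 0"
      define K where "K = \<bar>C\<bar>"
      have K0: "K \<ge> 0" unfolding K_def by simp
      define r where "r = e / (4 * (c + K + 1))"
      define e' where "e' = e / (4 * (2 * c + 1))"
      have r0: "r > 0" unfolding r_def using e c K0 by simp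
      have e'0: "e' > 0" unfolding e'_def using e c by simp
      have "s \<in> L2closure P S" using sT S_dense T_def by simp
      then obtain s' where s'S: "s' \<in> S" and ss': "L2norm P (\<lambda>x. s x - s' x) < r"
        using r0 unfolding L2closure_def by blast
      have s'L: "s' \<in> L2 P" using S_sub s'S by blast
      have s'T: "s' \<in> T" using L2closure_sub[OF S_sub] S_dense T_def s'S by blast
      obtain Q where Q: "Q \<in> submodels lam Model P s'"
        and DQ: "((\<lambda>\<epsilon>. norm (\<nu> (Q \<epsilon>) - \<nu> P - \<epsilon> *\<^sub>R \<eta> s') / \<epsilon>) \<longlongrightarrow> 0) (at_right 0)"
        using S_paths s'S by blast
      obtain d2 where d2: "d2 > 0" and mem2: "\<forall>\<epsilon>\<in>{0..<d2}. Q \<epsilon> \<in> Model"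
        and R2: "((\<lambda>\<epsilon>. L2norm lam (\<lambda>x. sqrt (dens lam (Q \<epsilon>) x) - sqrt (dens lam P x)
                   - \<epsilon> * s' x * sqrt (dens lam P x) / 2) / \<epsilon>) \<longlongrightarrow> 0) (at_right 0)"
        using Q unfolding submodels_def by blast
      define B0 where "B0 = e' + L2norm P s / 2 + L2norm P s' / 2 + 1"
      have B0: "B0 > 0" unfolding B0_def using e'0 L2norm_nonneg[of P s] L2norm_nonneg[of P s'] by linarith
      have ev0: "eventually (\<lambda>\<epsilon>. 0 < \<epsilon> \<and> \<epsilon> < d1 \<and> \<epsilon> < d2 \<and> \<epsilon> * B0 < \<delta>) (at_right 0)"
        unfolding eventually_at_right_field
      proof (intro exI[of _ "min d1 (min d2 (\<delta> / B0))"] conjI allI impI)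
        show "0 < min d1 (min d2 (\<delta> / B0))" using d1 d2 \<delta> B0 by simp
        fix y :: real assume y: "0 < y" "y < min d1 (min d2 (\<delta> / B0))"
        then show "0 < y" "y < d1" "y < d2" by auto
        have "y < \<delta> / B0" using y by simp
        then show "y * B0 < \<delta>" using B0 by (simp add: pos_less_divide_eq)
      qed
      have ev1: "eventually (\<lambda>\<epsilon>. dist (L2norm lam (\<lambda>x. sqrt (dens lam (Pe \<epsilon>) x) - sqrt (dens lam P x)
                 - \<epsilon> * s x * sqrt (dens lam P x) / 2) / \<epsilon>) 0 < e') (at_right 0)"
        using R1 e'0 unfolding tendsto_iff by blast
      have ev2: "eventually (\<lambda>\<epsilon>. dist (L2norm lam (\<lambda>x. sqrt (dens lam (Q \<epsilon>) x) - sqrt (dens lam P x)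
                 - \<epsilon> * s' x * sqrt (dens lam P x) / 2) / \<epsilon>) 0 < e') (at_right 0)"
        using R2 e'0 unfolding tendsto_iff by blast
      have ev3: "eventually (\<lambda>\<epsilon>. dist (norm (\<nu> (Q \<epsilon>) - \<nu> P - \<epsilon> *\<^sub>R \<eta> s') / \<epsilon>) 0 < e') (at_right 0)"
        using DQ e'0 unfolding tendsto_iff by blast
      define h where "h = (\<lambda>x. 1 * s' x + (-1) * s x)"
      have hT: "h \<in> T" unfolding h_def by (rule Tcomb[OF s'T sT])
      have "\<eta> h = 1 *\<^sub>R \<eta> s' + (-1) *\<^sub>R \<eta> s" unfolding h_def by (rule lin[rule_format, OF s'T sT])
      then have etah: "\<eta> h = \<eta> s' - \<eta> s" by simp
      have hn: "L2norm P h = L2norm P (\<lambda>x. s x - s' x)"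
        unfolding h_def by (subst L2norm_swap) (rule L2norm_cong, simp)
      have etad: "norm (\<eta> s' - \<eta> s) \<le> K * r"
      proof -
        have "norm (\<eta> s' - \<eta> s) \<le> C * L2norm P h" using bspec[OF C hT] unfolding etah .
        also have "\<dots> \<le> K * L2norm P h" unfolding K_def
          using L2norm_nonneg[of P h] by (intro mult_right_mono) auto
        also have "\<dots> \<le> K * r" using hn ss' K0 by (intro mult_left_mono) auto
        finally show ?thesis .
      qed
      show "eventually (\<lambda>\<epsilon>. dist (norm (\<nu> (Pe \<epsilon>) - \<nu> P - \<epsilon> *\<^sub>R \<eta> s) / \<epsilon>) 0 < e) (at_right 0)"
        using ev0 ev1 ev2 ev3
      proof eventually_elim
        case (elim \<epsilon>)
        have \<epsilon>0: "0 < \<epsilon>" and \<epsilon>1: "\<epsilon> < d1" and \<epsilon>2: "\<epsilon> < d2" and \<epsilon>B: "\<epsilon> * B0 < \<delta>"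
          using elim(1) by auto
        have PeM: "Pe \<epsilon> \<in> Model" using mem1 \<epsilon>0 \<epsilon>1 by auto
        have QM: "Q \<epsilon> \<in> Model" using mem2 \<epsilon>0 \<epsilon>2 by auto
        define pe where "pe = (\<lambda>x. sqrt (dens lam (Pe \<epsilon>) x))"
        define q where "q = (\<lambda>x. sqrt (dens lam (Q \<epsilon>) x))"
        define rho where "rho = (\<lambda>x. sqrt (dens lam P x))"
        define A where "A = (\<lambda>x. pe x - rho x - \<epsilon> * s x * rho x / 2)"
        define B where "B = (\<lambda>x. q x - rho x - \<epsilon> * s' x * rho x / 2)"
        have peL: "pe \<in> L2 lam" unfolding pe_def by (rule DL[OF PeM])
        have qL: "q \<in> L2 lam" unfolding q_def by (rule DL[OF QM])
        have rhoL: "rho \<in> L2 lam" unfolding rho_def by (rule DL[OF P_in])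
        have srL: "(\<lambda>x. s x * rho x) \<in> L2 lam" unfolding rho_def by (rule W1[OF sL])
        have s'rL: "(\<lambda>x. s' x * rho x) \<in> L2 lam" unfolding rho_def by (rule W1[OF s'L])
        have dL: "(\<lambda>x. s x - s' x) \<in> L2 P" by (rule L2_diff[OF sL s'L])
        have drL: "(\<lambda>x. (s x - s' x) * rho x) \<in> L2 lam" unfolding rho_def by (rule W1[OF dL])
        have srn: "L2norm lam (\<lambda>x. s x * rho x) = L2norm P s" unfolding rho_def by (rule W2[OF sL])
        have s'rn: "L2norm lam (\<lambda>x. s' x * rho x) = L2norm P s'" unfolding rho_def by (rule W2[OF s'L])
        have drn: "L2norm lam (\<lambda>x. (s x - s' x) * rho x) = L2norm P (\<lambda>x. s x - s' x)"
          unfolding rho_def by (rule W2[OF dL])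
        have AL: "A \<in> L2 lam"
          by (rule L2_cong[OF L2_add[OF L2_diff[OF peL rhoL] L2_scale[OF srL, of "- \<epsilon> / 2"]]])
             (simp add: A_def algebra_simps)
        have BL: "B \<in> L2 lam"
          by (rule L2_cong[OF L2_add[OF L2_diff[OF qL rhoL] L2_scale[OF s'rL, of "- \<epsilon> / 2"]]])
             (simp add: B_def algebra_simps)
        have nA: "L2norm lam A < e' * \<epsilon>"
        proof -
          have "L2norm lam A / \<epsilon> < e'"
            using elim(2) L2norm_nonneg[of lam A] \<epsilon>0
            by (simp add: A_def pe_def rho_def dist_real_def)
          then show ?thesis using \<epsilon>0 by (simp add: pos_divide_less_eq)
        qed
        have nB: "L2norm lam B < e' * \<epsilon>"
        proof -
          have "L2norm lam B / \<epsilon> < e'"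
            using elim(3) L2norm_nonneg[of lam B] \<epsilon>0
            by (simp add: B_def q_def rho_def dist_real_def)
          then show ?thesis using \<epsilon>0 by (simp add: pos_divide_less_eq)
        qed
        have nD: "norm (\<nu> (Q \<epsilon>) - \<nu> P - \<epsilon> *\<^sub>R \<eta> s') < e' * \<epsilon>"
        proof -
          have "norm (\<nu> (Q \<epsilon>) - \<nu> P - \<epsilon> *\<^sub>R \<eta> s') / \<epsilon> < e'"
            using elim(4) \<epsilon>0 by (simp add: dist_real_def)
          then show ?thesis using \<epsilon>0 by (simp add: pos_divide_less_eq)
        qed
        have HPQ: "hellinger lam (Pe \<epsilon>) (Q \<epsilon>) \<le> 2 * e' * \<epsilon> + \<epsilon> * r / 2"
        proof -
          have "hellinger lam (Pe \<epsilon>) (Q \<epsilon>) = L2norm lam (\<lambda>x. pe x - q x)"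
            by (simp add: hellinger_def L2norm_def pe_def q_def)
          also have "\<dots> = L2norm lam (\<lambda>x. (A x - B x) + (\<epsilon> / 2) * ((s x - s' x) * rho x))"
            by (rule L2norm_cong) (simp add: A_def B_def algebra_simps)
          also have "\<dots> \<le> L2norm lam (\<lambda>x. A x - B x) + L2norm lam (\<lambda>x. (\<epsilon> / 2) * ((s x - s' x) * rho x))"
            by (rule L2_minkowski[OF L2_diff[OF AL BL] L2_scale[OF drL]])
          also have "\<dots> \<le> L2norm lam A + L2norm lam B + \<epsilon> / 2 * L2norm P (\<lambda>x. s x - s' x)"
          proof -
            have sc: "L2norm lam (\<lambda>x. (\<epsilon> / 2) * ((s x - s' x) * rho x)) = \<epsilon> / 2 * L2norm P (\<lambda>x. s x - s' x)"
              unfolding L2norm_scale drn using \<epsilon>0 by simp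
            show ?thesis using L2_minus[OF AL BL] unfolding sc by linarith
          qed
          also have "\<dots> \<le> 2 * e' * \<epsilon> + \<epsilon> * r / 2"
          proof -
            have "\<epsilon> / 2 * L2norm P (\<lambda>x. s x - s' x) \<le> \<epsilon> / 2 * r"
              using ss' \<epsilon>0 by (intro mult_left_mono) auto
            then show ?thesis using nA nB by linarith
          qed
          finally show ?thesis .
        qed
        have HP1: "hellinger lam P (Pe \<epsilon>) \<le> \<delta>"
        proof -
          have "hellinger lam P (Pe \<epsilon>) = L2norm lam (\<lambda>x. rho x - pe x)"
            by (simp add: hellinger_def L2norm_def pe_def rho_def)
          also have "\<dots> = L2norm lam (\<lambda>x. pe x - rho x)" by (rule L2norm_swap)
          also have "\<dots> = L2norm lam (\<lambda>x. A x + (\<epsilon> / 2) * (s x * rho x))"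
            by (rule L2norm_cong) (simp add: A_def algebra_simps)
          also have "\<dots> \<le> L2norm lam A + L2norm lam (\<lambda>x. (\<epsilon> / 2) * (s x * rho x))"
            by (rule L2_minkowski[OF AL L2_scale[OF srL]])
          also have "\<dots> = L2norm lam A + \<epsilon> / 2 * L2norm P s"
            unfolding L2norm_scale srn using \<epsilon>0 by simp
          also have "\<dots> \<le> \<epsilon> * B0"
            using nA \<epsilon>0 mult_nonneg_nonneg[OF less_imp_le[OF \<epsilon>0] L2norm_nonneg[of P s']] unfolding B0_def by (simp add: algebra_simps)
          finally show ?thesis using \<epsilon>B by simp
        qed
        have HP2: "hellinger lam P (Q \<epsilon>) \<le> \<delta>"
        proof -
          have "hellinger lam P (Q \<epsilon>) = L2norm lam (\<lambda>x. rho x - q x)"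
            by (simp add: hellinger_def L2norm_def q_def rho_def)
          also have "\<dots> = L2norm lam (\<lambda>x. q x - rho x)" by (rule L2norm_swap)
          also have "\<dots> = L2norm lam (\<lambda>x. B x + (\<epsilon> / 2) * (s' x * rho x))"
            by (rule L2norm_cong) (simp add: B_def algebra_simps)
          also have "\<dots> \<le> L2norm lam B + L2norm lam (\<lambda>x. (\<epsilon> / 2) * (s' x * rho x))"
            by (rule L2_minkowski[OF BL L2_scale[OF s'rL]])
          also have "\<dots> = L2norm lam B + \<epsilon> / 2 * L2norm P s'"
            unfolding L2norm_scale s'rn using \<epsilon>0 by simp
          also have "\<dots> \<le> \<epsilon> * B0"
            using nB \<epsilon>0 mult_nonneg_nonneg[OF less_imp_le[OF \<epsilon>0] L2norm_nonneg[of P s]] unfolding B0_def by (simp add: algebra_simps)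
          finally show ?thesis using \<epsilon>B by simp
        qed
        have L: "norm (\<nu> (Pe \<epsilon>) - \<nu> (Q \<epsilon>)) \<le> c * hellinger lam (Pe \<epsilon>) (Q \<epsilon>)"
          by (rule lip[OF PeM HP1 QM HP2])
        define N where "N = norm (\<nu> (Pe \<epsilon>) - \<nu> P - \<epsilon> *\<^sub>R \<eta> s)"
        have "\<nu> (Pe \<epsilon>) - \<nu> P - \<epsilon> *\<^sub>R \<eta> s
            = (\<nu> (Pe \<epsilon>) - \<nu> (Q \<epsilon>)) + (\<nu> (Q \<epsilon>) - \<nu> P - \<epsilon> *\<^sub>R \<eta> s') + \<epsilon> *\<^sub>R (\<eta> s' - \<eta> s)"
          by (simp add: algebra_simps)
        then have "N \<le> norm (\<nu> (Pe \<epsilon>) - \<nu> (Q \<epsilon>)) + norm (\<nu> (Q \<epsilon>) - \<nu> P - \<epsilon> *\<^sub>R \<eta> s')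
                    + norm (\<epsilon> *\<^sub>R (\<eta> s' - \<eta> s))"
          unfolding N_def by (metis norm_triangle_le order_refl add_mono)
        moreover have "norm (\<epsilon> *\<^sub>R (\<eta> s' - \<eta> s)) \<le> \<epsilon> * (K * r)"
          using etad \<epsilon>0 by (simp add: mult_left_mono)
        moreover have "c * hellinger lam (Pe \<epsilon>) (Q \<epsilon>) \<le> c * (2 * e' * \<epsilon> + \<epsilon> * r / 2)"
          using HPQ c by (intro mult_left_mono) auto
        ultimately have "N \<le> c * (2 * e' * \<epsilon> + \<epsilon> * r / 2) + e' * \<epsilon> + \<epsilon> * (K * r)"
          using L nD by linarith
        also have "\<dots> = \<epsilon> * ((2 * c + 1) * e' + (c / 2 + K) * r)"
          by (simp add: algebra_simps)
        also have "\<dots> \<le> \<epsilon> * (e / 2)"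
        proof -
          have a: "(2 * c + 1) * e' = e / 4" unfolding e'_def using c by (simp add: field_simps)
          have "(c / 2 + K) * r \<le> (c + K + 1) * r" using c K0 r0 by (intro mult_right_mono) auto
          also have "\<dots> = e / 4" unfolding r_def using c K0 by (simp add: field_simps)
          finally have "(2 * c + 1) * e' + (c / 2 + K) * r \<le> e / 2" using a by linarith
          then show ?thesis using \<epsilon>0 by (intro mult_left_mono) auto
        qed
        finally have "N / \<epsilon> \<le> e / 2" using \<epsilon>0 by (simp add: pos_divide_le_eq mult.commute)
        moreover have "0 \<le> N / \<epsilon>" unfolding N_def using \<epsilon>0 by simp
        ultimately have "dist (N / \<epsilon>) 0 < e" using e by (simp only: dist_real_def diff_zero)
        then show ?case unfolding N_def .
      qed
    qed
  qed
qed

end
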